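(* Let $\{\mu_n\}_{n\ge0}$ be a consistent family of (possibly infinite) measures, $\mu_n$ on $(\Omega_n,\mathcal{B}_n)$. If for some $n_0$ the measure $\mu_{n_0}$ is $\sigma$-finite, then there exists a unique $\sigma$-additive measure $\bar\mu$ on $(\Omega,\mathcal{B})$ such that $\pi_{V_n}(\bar\mu)=\mu_n$ for all $n$.
   Context: Let $\Im^k=(V,L)$ be the Cayley tree of order $k\ge1$, with vertices enumerated as $V=\{x_0,x_1,\dots\}$. Let $\Phi$ be a finite or countably infinite set, $\Omega=\Phi^V$ with metric $\rho(\sigma,\sigma')=\sum_{n\ge0}2^{-n}\mathbf{1}_{\{\sigma(x_n)\ne\sigma'(x_n)\}}$ and Borel $\sigma$-field $\mathcal{B}$. Fix $x^0\in V$, let $d$ be the graph distance, $V_n=\{x\in V: d(x,x^0)\le n\}$, $\Omega_n=\Phi^{V_n}$ (countable, discrete) with $\mathcal{B}_n$ its power set, and $\pi_n:\Omega\to\Omega_n$, $\pi_n(\sigma)=\sigma|_{V_n}$. Projections of measures: $[\pi_{V_i}(\nu)](B)=\nu\{\sigma\in\Omega_j:\sigma|_{V_i}\in B\}$ for $\nu$ on $\mathcal{B}_j$, $i<j$, and $[\pi_{V_n}(\mu)](B)=\mu(\pi_n^{-1}(B))$ for $\mu$ on $\mathcal{B}$. Consistency means $\pi_{V_i}(\mu_j)=\mu_i$ for all $i<j$. *)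

theory Defs
  imports "HOL-Analysis.Analysis" "HOL-Library.Countable"
begin

text \<open>A graph on the vertex type 'v is given by a symmetric irreflexive adjacency relation E.\<close>

definition is_cycle :: "('v \<Rightarrow> 'v \<Rightarrow> bool) \<Rightarrow> 'v list \<Rightarrow> bool" where
  "is_cycle E xs \<longleftrightarrow> length xs \<ge> 3 \<and> distinct xs
     \<and> (\<forall>i. Suc i < length xs \<longrightarrow> E (xs ! i) (xs ! Suc i))
     \<and> E (last xs) (hd xs)"

definition cayley_tree :: "nat \<Rightarrow> ('v \<Rightarrow> 'v \<Rightarrow> bool) \<Rightarrow> bool" where
  "cayley_tree k E \<longleftrightarrow>
     (\<forall>x y. E x y \<longrightarrow> E y x) \<and> (\<forall>x. \<not> E x x)
     \<and> (\<forall>x. finite {y. E x y} \<and> card {y. E x y} = k + 1)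
     \<and> (\<forall>x y. E\<^sup>*\<^sup>* x y)
     \<and> (\<nexists>xs. is_cycle E xs)"

definition gdist :: "('v \<Rightarrow> 'v \<Rightarrow> bool) \<Rightarrow> 'v \<Rightarrow> 'v \<Rightarrow> nat" where
  "gdist E x y = (LEAST n. (E ^^ n) x y)"

definition ball_V :: "('v \<Rightarrow> 'v \<Rightarrow> bool) \<Rightarrow> 'v \<Rightarrow> nat \<Rightarrow> 'v set" where
  "ball_V E x0 n = {x. gdist E x0 x \<le> n}"

definition Omega_n :: "('v \<Rightarrow> 'v \<Rightarrow> bool) \<Rightarrow> 'v \<Rightarrow> nat \<Rightarrow> ('v \<Rightarrow> 'a) set" where
  "Omega_n E x0 n = PiE (ball_V E x0 n) (\<lambda>_. UNIV)"

definition proj_n :: "('v \<Rightarrow> 'v \<Rightarrow> bool) \<Rightarrow> 'v \<Rightarrow> nat \<Rightarrow> ('v \<Rightarrow> 'a) \<Rightarrow> ('v \<Rightarrow> 'a)" where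
  "proj_n E x0 n \<sigma> = restrict \<sigma> (ball_V E x0 n)"

definition proj_measure :: "('v \<Rightarrow> 'v \<Rightarrow> bool) \<Rightarrow> 'v \<Rightarrow> nat \<Rightarrow> ('v \<Rightarrow> 'a) measure \<Rightarrow> ('v \<Rightarrow> 'a) measure" where
  "proj_measure E x0 i \<nu> = distr \<nu> (count_space (Omega_n E x0 i)) (proj_n E x0 i)"

definition rho :: "(nat \<Rightarrow> 'v) \<Rightarrow> ('v \<Rightarrow> 'a) \<Rightarrow> ('v \<Rightarrow> 'a) \<Rightarrow> real" where
  "rho enum \<sigma> \<sigma>' = (\<Sum>n. (1/2) ^ n * (if \<sigma> (enum n) \<noteq> \<sigma>' (enum n) then 1 else 0))"

definition rho_open :: "(nat \<Rightarrow> 'v) \<Rightarrow> ('v \<Rightarrow> 'a) set \<Rightarrow> bool" where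
  "rho_open enum U \<longleftrightarrow> (\<forall>\<sigma>\<in>U. \<exists>e>0. \<forall>\<sigma>'. rho enum \<sigma> \<sigma>' < e \<longrightarrow> \<sigma>' \<in> U)"

definition Omega_Borel :: "(nat \<Rightarrow> 'v) \<Rightarrow> ('v \<Rightarrow> 'a) measure" where
  "Omega_Borel enum = sigma UNIV {U. rho_open enum U}"

end

theory Submission
  imports Defs "HOL-Probability.Probability"
begin

locale kol =
  fixes E :: "'v \<Rightarrow> 'v \<Rightarrow> bool" and x0 :: 'v and enum :: "nat \<Rightarrow> 'v"
    and \<mu> :: "nat \<Rightarrow> ('v \<Rightarrow> 'a::countable) measure" and n0 :: nat
    and h :: "('v \<Rightarrow> 'a) \<Rightarrow> ennreal"
  assumes locfin: "\<And>x. finite {y. E x y}"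
    and conn: "\<And>x y. E\<^sup>*\<^sup>* x y"
    and benum: "bij enum"
    and sets_mu: "\<And>n. sets (\<mu> n) = Pow (Omega_n E x0 n)"
    and cons: "\<And>i j. i < j \<Longrightarrow> proj_measure E x0 i (\<mu> j) = \<mu> i"
    and h_int: "integral\<^sup>N (\<mu> n0) h \<noteq> \<infinity>"
    and h_pos: "\<And>x. x \<in> Omega_n E x0 n0 \<Longrightarrow> 0 < h x \<and> h x < \<infinity>"
begin

abbreviation "V \<equiv> ball_V E x0"
abbreviation "\<Omega> \<equiv> (Omega_n E x0 :: nat \<Rightarrow> ('v \<Rightarrow> 'a) set)"
abbreviation "\<pi> \<equiv> (proj_n E x0 :: nat \<Rightarrow> ('v \<Rightarrow> 'a) \<Rightarrow> _)"

lemma V_char: "V n = {x. \<exists>m\<le>n. (E ^^ m) x0 x}"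
proof -
  have "gdist E x0 x \<le> n \<longleftrightarrow> (\<exists>m\<le>n. (E ^^ m) x0 x)" for x
  proof
    obtain m where m: "(E ^^ m) x0 x" using conn[of x0 x] by (metis rtranclp_imp_relpowp)
    then have "(E ^^ gdist E x0 x) x0 x" unfolding gdist_def by (rule LeastI)
    then show "gdist E x0 x \<le> n \<Longrightarrow> \<exists>m\<le>n. (E ^^ m) x0 x" by blast
    show "\<exists>m\<le>n. (E ^^ m) x0 x \<Longrightarrow> gdist E x0 x \<le> n"
      unfolding gdist_def by (meson Least_le order_trans)
  qed
  then show ?thesis unfolding ball_V_def by blast
qed

lemma finite_pow: "finite {x. (E ^^ m) x0 x}"
proof (induction m)
  case 0 then show ?case by simp
next
  case (Suc m)
  have "{x. (E ^^ Suc m) x0 x} \<subseteq> (\<Union>y\<in>{x. (E ^^ m) x0 x}. {z. E y z})"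
    by auto
  then show ?case using Suc locfin by (meson finite_UN_I finite_subset)
qed

lemma finite_V: "finite (V n)"
proof -
  have "V n = (\<Union>m\<le>n. {x. (E ^^ m) x0 x})" unfolding V_char by auto
  then show ?thesis using finite_pow by auto
qed

lemma V_mono: "n \<le> m \<Longrightarrow> V n \<subseteq> V m"
  unfolding ball_V_def by auto

lemma in_V: "x \<in> V (gdist E x0 x)"
  unfolding ball_V_def by auto

lemma finite_in_V: "finite F \<Longrightarrow> \<exists>n\<ge>k. F \<subseteq> V n"
proof -
  assume "finite F"
  then have "\<exists>n. \<forall>x\<in>F. gdist E x0 x \<le> n" using finite_nat_set_iff_bounded_le
    by (metis (no_types, lifting) finite_imageI imageI)
  then obtain n where "\<forall>x\<in>F. gdist E x0 x \<le> n" by blast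
  then have "F \<subseteq> V (max n k)" unfolding ball_V_def by auto
  then show ?thesis by (intro exI[of _ "max n k"]) auto
qed

lemma countable_Omega: "countable (\<Omega> n)"
  unfolding Omega_n_def by (intro countable_PiE finite_V) auto

lemma pi_in[simp]: "\<pi> n \<sigma> \<in> \<Omega> n"
  unfolding proj_n_def Omega_n_def by auto

lemma pi_pi: "n \<le> m \<Longrightarrow> \<pi> n (\<pi> m \<sigma>) = \<pi> n \<sigma>"
  unfolding proj_n_def using V_mono by (auto simp: restrict_def fun_eq_iff)

lemma pi_id: "f \<in> \<Omega> n \<Longrightarrow> \<pi> n f = f"
  unfolding proj_n_def Omega_n_def by (auto simp: restrict_def fun_eq_iff PiE_def extensional_def)

lemma sets_mu': "sets (\<mu> n) = sets (count_space (\<Omega> n))"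
  using sets_mu by simp

lemma space_mu[simp]: "space (\<mu> n) = \<Omega> n"
  using sets_eq_imp_space_eq[OF sets_mu'] by simp

lemma meas_mu: "f \<in> measurable (\<mu> n) (count_space A) \<longleftrightarrow> f \<in> \<Omega> n \<rightarrow> A"
  by (simp add: measurable_cong_sets[OF sets_mu' refl] measurable_count_space_eq1)

lemma cons': assumes ij: "i \<le> j" shows "distr (\<mu> j) (count_space (\<Omega> i)) (\<pi> i) = \<mu> i"
proof (cases "i = j")
  case True
  show ?thesis
  proof (rule measure_eqI)
    show "sets (distr (\<mu> j) (count_space (\<Omega> i)) (\<pi> i)) = sets (\<mu> i)" using sets_mu by simp
    fix X assume "X \<in> sets (distr (\<mu> j) (count_space (\<Omega> i)) (\<pi> i))"
    then have X: "X \<subseteq> \<Omega> i" by simp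
    have "\<pi> i -` X \<inter> \<Omega> i = X" using X True pi_id by auto
    then show "emeasure (distr (\<mu> j) (count_space (\<Omega> i)) (\<pi> i)) X = emeasure (\<mu> i) X"
      using True X by (subst emeasure_distr) (auto simp: meas_mu)
  qed
next
  case False
  then show ?thesis using cons[of i j] ij unfolding proj_measure_def by simp
qed

lemma mu_point_fin: "\<omega> \<in> \<Omega> n0 \<Longrightarrow> emeasure (\<mu> n0) {\<omega>} \<noteq> \<infinity>"
proof
  assume w: "\<omega> \<in> \<Omega> n0" and inf: "emeasure (\<mu> n0) {\<omega>} = \<infinity>"
  have "h \<omega> * emeasure (\<mu> n0) {\<omega>} = (\<integral>\<^sup>+x. h \<omega> * indicator {\<omega>} x \<partial>\<mu> n0)"
    using w by (subst nn_integral_cmult_indicator) (auto simp: sets_mu)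
  also have "\<dots> = (\<integral>\<^sup>+x. h x * indicator {\<omega>} x \<partial>\<mu> n0)"
    by (intro nn_integral_cong) (auto simp: indicator_def)
  also have "\<dots> \<le> integral\<^sup>N (\<mu> n0) h"
    by (intro nn_integral_mono) (auto simp: indicator_def)
  finally have "h \<omega> * emeasure (\<mu> n0) {\<omega>} \<noteq> \<infinity>" using h_int by (auto simp: top_unique)
  then show False using inf h_pos[OF w] by (auto simp: ennreal_mult_eq_top_iff)
qed


definition G :: "('v \<Rightarrow> 'a) set set" where "G = {\<pi> n -` B | n B. n0 \<le> n}"

lemma pre_in_G: "\<pi> n -` B \<in> G"
proof -
  have "\<pi> n -` B = \<pi> (max n n0) -` (\<pi> n -` B)" using pi_pi[of n "max n n0"] by auto
  moreover have "n0 \<le> max n n0" by simp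
  ultimately show ?thesis unfolding G_def by blast
qed

lemma rho_summ: "summable (\<lambda>n. (1/2::real)^n * (if \<sigma> (enum n) \<noteq> \<sigma>' (enum n) then 1 else 0))"
  by (rule summable_comparison_test'[OF summable_geometric[of "1/2::real"], of 0]) auto

lemma rho_ge: "\<sigma> (enum i) \<noteq> \<sigma>' (enum i) \<Longrightarrow> (1/2)^i \<le> rho enum \<sigma> \<sigma>'"
  using sum_le_suminf[OF rho_summ, of "{i}" \<sigma> \<sigma>'] by (simp add: rho_def)

lemma rho_le: assumes "\<forall>i\<le>N. \<sigma> (enum i) = \<sigma>' (enum i)" shows "rho enum \<sigma> \<sigma>' \<le> (1/2)^N"
proof -
  define f where "f = (\<lambda>n. (1/2::real)^n * (if \<sigma> (enum n) \<noteq> \<sigma>' (enum n) then 1 else 0))"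
  have s: "summable f" unfolding f_def by (rule rho_summ)
  have "rho enum \<sigma> \<sigma>' = (\<Sum>n. f (n + Suc N)) + (\<Sum>i<Suc N. f i)"
    unfolding rho_def f_def[symmetric] by (rule suminf_split_initial_segment[OF s])
  also have "(\<Sum>i<Suc N. f i) = 0" using assms by (auto simp: f_def)
  also have "(\<Sum>n. f (n + Suc N)) \<le> (\<Sum>n. (1/2)^Suc N * (1/2::real)^n)"
  proof (rule suminf_le)
    show "summable (\<lambda>n. f (n + Suc N))" by (rule summable_ignore_initial_segment[OF s])
    show "summable (\<lambda>n. (1/2)^Suc N * (1/2::real)^n)"
      by (intro summable_mult summable_geometric) auto
    fix n show "f (n + Suc N) \<le> (1/2)^Suc N * (1/2::real)^n"
      by (auto simp: f_def power_add)
  qed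
  also have "(\<Sum>n. (1/2)^Suc N * (1/2::real)^n) = (1/2)^N"
    by (subst suminf_mult) (auto simp: suminf_geometric)
  finally show ?thesis by simp
qed

lemma open_if_finite_dep:
  assumes "finite F" "\<And>\<sigma> \<sigma>'. \<sigma> \<in> U \<Longrightarrow> (\<forall>v\<in>F. \<sigma>' v = \<sigma> v) \<Longrightarrow> \<sigma>' \<in> U"
  shows "rho_open enum U"
proof -
  obtain N where N: "\<forall>k\<in>inv enum ` F. k \<le> N"
    using finite_nat_set_iff_bounded_le assms(1) by (meson finite_imageI)
  have FN: "v \<in> F \<Longrightarrow> \<exists>i\<le>N. v = enum i" for v
    using N benum by (metis bij_inv_eq_iff image_eqI)
  show ?thesis unfolding rho_open_def
  proof (intro ballI exI[of _ "(1/2)^N"] conjI allI impI)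
    show "(0::real) < (1/2)^N" by simp
    fix \<sigma> \<sigma>' assume s: "\<sigma> \<in> U" and r: "rho enum \<sigma> \<sigma>' < (1/2)^N"
    have "\<sigma> (enum i) = \<sigma>' (enum i)" if "i \<le> N" for i
    proof (rule ccontr)
      assume "\<sigma> (enum i) \<noteq> \<sigma>' (enum i)"
      then have "(1/2::real)^i \<le> rho enum \<sigma> \<sigma>'" by (rule rho_ge)
      moreover have "(1/2::real)^N \<le> (1/2)^i" using that by (intro power_decreasing) auto
      ultimately show False using r by simp
    qed
    then have "\<forall>v\<in>F. \<sigma>' v = \<sigma> v" using FN by metis
    then show "\<sigma>' \<in> U" using assms(2) s by blast
  qed
qed

lemma G_open: "A \<in> G \<Longrightarrow> rho_open enum A"
  unfolding G_def
proof safe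
  fix n B
  show "rho_open enum (\<pi> n -` B)"
  proof (rule open_if_finite_dep[OF finite_V[of n]])
    fix \<sigma> \<sigma>' assume "\<sigma> \<in> \<pi> n -` B" "\<forall>v\<in>V n. \<sigma>' v = \<sigma> v"
    moreover have "\<pi> n \<sigma>' = \<pi> n \<sigma>" using calculation(2) unfolding proj_n_def by auto
    ultimately show "\<sigma>' \<in> \<pi> n -` B" by simp
  qed
qed

definition cyl :: "nat \<Rightarrow> 'a list \<Rightarrow> ('v \<Rightarrow> 'a) set" where
  "cyl N xs = {\<sigma>. \<forall>i\<le>N. \<sigma> (enum i) = xs ! i}"

lemma cyl_G: "cyl N xs \<in> G"
proof -
  obtain n where n: "n \<ge> n0" "enum ` {..N} \<subseteq> V n" using finite_in_V[of "enum ` {..N}" n0] by auto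
  have "cyl N xs = \<pi> n -` {f. \<forall>i\<le>N. f (enum i) = xs ! i}"
    using n unfolding cyl_def proj_n_def by auto
  then show ?thesis using n(1) unfolding G_def by blast
qed

lemma open_sig: assumes U: "rho_open enum U" shows "U \<in> sigma_sets UNIV G"
proof -
  define C where "C = {cyl N xs | N xs. cyl N xs \<subseteq> U}"
  have "U \<subseteq> \<Union>C"
  proof
    fix \<sigma> assume s: "\<sigma> \<in> U"
    obtain e where e: "e > 0" "\<forall>\<sigma>'. rho enum \<sigma> \<sigma>' < e \<longrightarrow> \<sigma>' \<in> U" using U s unfolding rho_open_def by blast
    obtain N where N: "(1/2::real)^N < e" using real_arch_pow_inv[OF e(1), of "1/2"] by auto
    define xs where "xs = map (\<lambda>i. \<sigma> (enum i)) [0..<Suc N]"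
    have xs: "i \<le> N \<Longrightarrow> xs ! i = \<sigma> (enum i)" for i
      unfolding xs_def by (subst nth_map) (auto simp del: upt_Suc)
    have "cyl N xs \<subseteq> U"
    proof
      fix \<sigma>' assume "\<sigma>' \<in> cyl N xs"
      then have "\<forall>i\<le>N. \<sigma> (enum i) = \<sigma>' (enum i)" using xs unfolding cyl_def by auto
      then have "rho enum \<sigma> \<sigma>' < e" using rho_le N by (meson le_less_trans)
      then show "\<sigma>' \<in> U" using e by blast
    qed
    moreover have "\<sigma> \<in> cyl N xs" using xs unfolding cyl_def by auto
    ultimately show "\<sigma> \<in> \<Union>C" unfolding C_def by blast
  qed
  then have UC: "U = \<Union>C" unfolding C_def by blast
  have "C \<subseteq> (\<lambda>(N, xs). cyl N xs) ` UNIV" unfolding C_def by auto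
  then have cC: "countable C" by (rule countable_subset) simp
  have "C \<subseteq> sigma_sets UNIV G" unfolding C_def using cyl_G by auto
  then show ?thesis unfolding UC
    by (intro sigma_algebra.countable_Union[OF sigma_algebra_sigma_sets cC]) auto
qed

lemma sets_OB: "sets (Omega_Borel enum) = sigma_sets UNIV G"
proof -
  have "sets (Omega_Borel enum) = sigma_sets UNIV {U. rho_open enum U}"
    unfolding Omega_Borel_def by (rule sets_measure_of) auto
  also have "\<dots> = sigma_sets UNIV G"
  proof
    show "sigma_sets UNIV {U. rho_open enum U} \<subseteq> sigma_sets UNIV G"
      by (rule sigma_sets_mono) (auto intro: open_sig)
    show "sigma_sets UNIV G \<subseteq> sigma_sets UNIV {U. rho_open enum U}"
      by (rule sigma_sets_mono) (auto intro: G_open)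
  qed
  finally show ?thesis .
qed

lemma space_OB[simp]: "space (Omega_Borel enum) = UNIV"
  unfolding Omega_Borel_def by simp

lemma G_sets: "\<pi> n -` B \<in> sets (Omega_Borel enum)"
  unfolding sets_OB using pre_in_G by auto

lemma pi_meas: "\<pi> n \<in> measurable (Omega_Borel enum) (count_space (\<Omega> n))"
  by (rule measurableI) (auto simp: G_sets)


lemma emeasure_G:
  assumes "sets M = sets (Omega_Borel enum)" "proj_measure E x0 n M = \<mu> n"
  shows "emeasure M (\<pi> n -` B) = emeasure (\<mu> n) (B \<inter> \<Omega> n)"
proof -
  have sp: "space M = UNIV" using sets_eq_imp_space_eq[OF assms(1)] by simp
  have m: "\<pi> n \<in> measurable M (count_space (\<Omega> n))"
    using pi_meas measurable_cong_sets[OF assms(1) refl] by blast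
  have "emeasure (\<mu> n) (B \<inter> \<Omega> n) = emeasure (distr M (count_space (\<Omega> n)) (\<pi> n)) (B \<inter> \<Omega> n)"
    using assms(2) unfolding proj_measure_def by simp
  also have "\<dots> = emeasure M (\<pi> n -` (B \<inter> \<Omega> n) \<inter> space M)"
    by (rule emeasure_distr[OF m]) auto
  also have "\<pi> n -` (B \<inter> \<Omega> n) \<inter> space M = \<pi> n -` B" using sp by auto
  finally show ?thesis by simp
qed

lemma Int_stable_G: "Int_stable G"
  unfolding Int_stable_def
proof safe
  fix a b assume "a \<in> G" "b \<in> G"
  then obtain n m B C where a: "a = \<pi> n -` B" "n0 \<le> n" and b: "b = \<pi> m -` C" "n0 \<le> m"
    unfolding G_def by blast
  have "a \<inter> b = \<pi> (max n m) -` (\<pi> n -` B \<inter> \<pi> m -` C)"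
    using a b pi_pi[of n "max n m"] pi_pi[of m "max n m"] by auto
  moreover have "n0 \<le> max n m" using a by simp
  ultimately show "a \<inter> b \<in> G" unfolding G_def by blast
qed

lemma unique:
  assumes "sets M1 = sets (Omega_Borel enum)" "\<forall>n. proj_measure E x0 n M1 = \<mu> n"
    and "sets M2 = sets (Omega_Borel enum)" "\<forall>n. proj_measure E x0 n M2 = \<mu> n"
  shows "M1 = M2"
proof (rule measure_eqI_generator_eq_countable[of G UNIV _ _ "(\<lambda>\<omega>. \<pi> n0 -` {\<omega>}) ` \<Omega> n0"])
  show "Int_stable G" by (rule Int_stable_G)
  show "G \<subseteq> Pow UNIV" by simp
  show "\<And>X. X \<in> G \<Longrightarrow> emeasure M1 X = emeasure M2 X"
    unfolding G_def using emeasure_G assms by auto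
  show "sets M1 = sigma_sets UNIV G" "sets M2 = sigma_sets UNIV G" using assms sets_OB by auto
  show "(\<lambda>\<omega>. \<pi> n0 -` {\<omega>}) ` \<Omega> n0 \<subseteq> G" using pre_in_G by auto
  show "\<Union> ((\<lambda>\<omega>. \<pi> n0 -` {\<omega>}) ` \<Omega> n0) = UNIV" by auto
  show "countable ((\<lambda>\<omega>. \<pi> n0 -` {\<omega>}) ` \<Omega> n0)" using countable_Omega by simp
  fix a assume "a \<in> (\<lambda>\<omega>. \<pi> n0 -` {\<omega>}) ` \<Omega> n0"
  then obtain \<omega> where w: "\<omega> \<in> \<Omega> n0" "a = \<pi> n0 -` {\<omega>}" by auto
  then show "emeasure M1 a \<noteq> \<infinity>"
    using emeasure_G[of M1 n0 "{\<omega>}"] assms mu_point_fin[OF w(1)] by auto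
qed


lemma meas_mu': "f \<in> measurable (\<mu> n) N \<longleftrightarrow> f \<in> \<Omega> n \<rightarrow> space N"
  by (simp add: measurable_cong_sets[OF sets_mu' refl] measurable_count_space_eq1)

lemma proj_all:
  assumes sM: "sets M = sets (Omega_Borel enum)" and hi: "\<And>n. n0 \<le> n \<Longrightarrow> proj_measure E x0 n M = \<mu> n"
  shows "proj_measure E x0 n M = \<mu> n"
proof (cases "n0 \<le> n")
  case True then show ?thesis by (rule hi)
next
  case False
  have m: "\<pi> n0 \<in> measurable M (count_space (\<Omega> n0))"
    using pi_meas measurable_cong_sets[OF sM refl] by blast
  have "proj_measure E x0 n M = distr (distr M (count_space (\<Omega> n0)) (\<pi> n0)) (count_space (\<Omega> n)) (\<pi> n)"
    unfolding proj_measure_def using False pi_pi[of n n0]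
    by (subst distr_distr[OF _ m]) (auto simp: comp_def)
  also have "\<dots> = distr (\<mu> n0) (count_space (\<Omega> n)) (\<pi> n)"
    using hi[of n0] unfolding proj_measure_def by simp
  also have "\<dots> = \<mu> n" using False by (intro cons') auto
  finally show ?thesis .
qed

lemma zero_case:
  assumes T0: "integral\<^sup>N (\<mu> n0) h = 0"
  shows "proj_measure E x0 n (null_measure (Omega_Borel enum)) = \<mu> n"
proof (rule proj_all)
  show "sets (null_measure (Omega_Borel enum)) = sets (Omega_Borel enum)" by simp
  have hm: "h \<in> borel_measurable (\<mu> n0)" by (simp add: meas_mu')
  have "AE x in \<mu> n0. h x = 0" using T0 nn_integral_0_iff_AE[OF hm] by simp
  then obtain N where N: "{x \<in> space (\<mu> n0). \<not> h x = 0} \<subseteq> N" "emeasure (\<mu> n0) N = 0" "N \<in> sets (\<mu> n0)"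
    by (rule AE_E)
  have "\<Omega> n0 \<subseteq> N" using N(1) h_pos by force
  then have Z: "emeasure (\<mu> n0) (\<Omega> n0) = 0" using N by (metis emeasure_eq_0 sets.top space_mu)
  fix n assume n: "n0 \<le> n"
  have Zn: "emeasure (\<mu> n) (\<Omega> n) = 0"
  proof -
    have "emeasure (\<mu> n0) (\<Omega> n0) = emeasure (distr (\<mu> n) (count_space (\<Omega> n0)) (\<pi> n0)) (\<Omega> n0)"
      using cons'[OF n] by simp
    also have "\<dots> = emeasure (\<mu> n) (\<pi> n0 -` \<Omega> n0 \<inter> space (\<mu> n))"
      by (rule emeasure_distr) (auto simp: meas_mu)
    also have "\<pi> n0 -` \<Omega> n0 \<inter> space (\<mu> n) = \<Omega> n" by auto
    finally show ?thesis using Z by simp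
  qed
  show "proj_measure E x0 n (null_measure (Omega_Borel enum)) = \<mu> n"
    unfolding proj_measure_def
  proof (rule measure_eqI)
    show "sets (distr (null_measure (Omega_Borel enum)) (count_space (\<Omega> n)) (\<pi> n)) = sets (\<mu> n)"
      using sets_mu by simp
    fix X assume "X \<in> sets (distr (null_measure (Omega_Borel enum)) (count_space (\<Omega> n)) (\<pi> n))"
    then have X: "X \<subseteq> \<Omega> n" by simp
    have m: "\<pi> n \<in> measurable (null_measure (Omega_Borel enum)) (count_space (\<Omega> n))"
      using pi_meas by (simp add: measurable_cong_sets[OF sets_null_measure refl])
    have "emeasure (\<mu> n) X = 0" using Zn X by (metis emeasure_eq_0 sets.top space_mu)
    then show "emeasure (distr (null_measure (Omega_Borel enum)) (count_space (\<Omega> n)) (\<pi> n)) X = emeasure (\<mu> n) X"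
      using X by (subst emeasure_distr[OF m]) auto
  qed
qed


end

lemma ennr_cancel: "0 < a \<Longrightarrow> a < \<infinity> \<Longrightarrow> 0 < T \<Longrightarrow> T < \<infinity> \<Longrightarrow> a / T * (T / a * i) = (i::ennreal)"
  by (metis ennreal_divide_self ennreal_times_divide infinity_ennreal_def
    mult.commute mult_1 zero_order(5))

lemma sets_PiM_disc:
  assumes "finite J"
  shows "sets (PiM J (\<lambda>_. borel :: ('a::countable) discrete measure)) = sets (count_space (PiE J (\<lambda>_. UNIV)))"
proof -
  have "A \<in> sets (PiM J (\<lambda>_. borel :: 'a discrete measure))" if A: "A \<subseteq> PiE J (\<lambda>_. UNIV)" for A
  proof (rule sets.countable)
    show "countable A" by (rule countable_subset[OF A]) (intro countable_PiE assms, simp)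
    fix a assume "a \<in> A"
    then have "a \<in> extensional J" using A by (auto simp: PiE_def)
    then have "{a} = PiE J (\<lambda>i. {a i})" by (simp add: PiE_singleton)
    also have "\<dots> \<in> sets (PiM J (\<lambda>_. borel :: 'a discrete measure))"
      using assms by (intro sets_PiM_I_finite) (auto simp: sets_borel_eq_count_space)
    finally show "{a} \<in> sets (PiM J (\<lambda>_. borel :: 'a discrete measure))" .
  qed
  moreover have "A \<in> sets (PiM J (\<lambda>_. borel :: 'a discrete measure)) \<Longrightarrow> A \<subseteq> PiE J (\<lambda>_. UNIV)" for A
    using sets.sets_into_space by (fastforce simp: space_PiM)
  ultimately show ?thesis by auto
qed

lemma meas_PiM_disc:
  assumes "finite J"
  shows "f \<in> measurable (PiM J (\<lambda>_. borel :: ('a::countable) discrete measure)) N \<longleftrightarrow> f \<in> PiE J (\<lambda>_. UNIV) \<rightarrow> space N"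
  by (simp add: measurable_cong_sets[OF sets_PiM_disc[OF assms] refl] measurable_count_space_eq1)

locale kol_pos = kol +
  assumes Tpos: "integral\<^sup>N (\<mu> n0) h \<noteq> 0"
begin

definition "T = integral\<^sup>N (\<mu> n0) h"

lemma T_pos: "0 < T" "T < \<infinity>"
  using Tpos h_int unfolding T_def by (auto simp: less_top zero_less_iff_neq_zero)

definition Q where
  "Q n = density (\<mu> n) (\<lambda>f. h (\<pi> n0 f) / T)"

lemma sets_Q: "sets (Q n) = sets (count_space (\<Omega> n))"
  unfolding Q_def using sets_mu' by simp

lemma space_Q[simp]: "space (Q n) = \<Omega> n"
  using sets_eq_imp_space_eq[OF sets_Q] by simp

lemma meas_Q: "f \<in> measurable (Q n) N \<longleftrightarrow> f \<in> \<Omega> n \<rightarrow> space N"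
  by (simp add: measurable_cong_sets[OF sets_Q refl] measurable_count_space_eq1)

lemma Q_cons:
  assumes i: "n0 \<le> i" "i \<le> j"
  shows "distr (Q j) (count_space (\<Omega> i)) (\<pi> i) = Q i"
proof (rule measure_eqI)
  show "sets (distr (Q j) (count_space (\<Omega> i)) (\<pi> i)) = sets (Q i)" using sets_Q by simp
  fix X assume "X \<in> sets (distr (Q j) (count_space (\<Omega> i)) (\<pi> i))"
  then have X: "X \<subseteq> \<Omega> i" by simp
  have "emeasure (distr (Q j) (count_space (\<Omega> i)) (\<pi> i)) X = emeasure (Q j) (\<pi> i -` X \<inter> \<Omega> j)"
    using X by (subst emeasure_distr) (auto simp: meas_Q)
  also have "\<dots> = (\<integral>\<^sup>+f. h (\<pi> n0 f) / T * indicator (\<pi> i -` X \<inter> \<Omega> j) f \<partial>\<mu> j)"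
    unfolding Q_def by (subst emeasure_density) (auto simp: meas_mu' sets_mu)
  also have "\<dots> = (\<integral>\<^sup>+f. (\<lambda>g. h (\<pi> n0 g) / T * indicator X g) (\<pi> i f) \<partial>\<mu> j)"
    using pi_pi[OF i(1)] by (intro nn_integral_cong) (auto simp: indicator_def)
  also have "\<dots> = (\<integral>\<^sup>+g. h (\<pi> n0 g) / T * indicator X g \<partial>distr (\<mu> j) (count_space (\<Omega> i)) (\<pi> i))"
    by (subst nn_integral_distr) (auto simp: meas_mu)
  also have "\<dots> = (\<integral>\<^sup>+g. h (\<pi> n0 g) / T * indicator X g \<partial>\<mu> i)"
    using cons'[OF i(2)] by simp
  also have "\<dots> = emeasure (Q i) X"
    unfolding Q_def using X by (subst emeasure_density) (auto simp: meas_mu' sets_mu)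
  finally show "emeasure (distr (Q j) (count_space (\<Omega> i)) (\<pi> i)) X = emeasure (Q i) X" .
qed

lemma prob_Q: assumes n: "n0 \<le> n" shows "prob_space (Q n)"
proof
  have "emeasure (Q n) (space (Q n)) = (\<integral>\<^sup>+f. h (\<pi> n0 f) / T * indicator (\<Omega> n) f \<partial>\<mu> n)"
    unfolding Q_def by (subst emeasure_density) (auto simp: meas_mu' sets_mu)
  also have "\<dots> = (\<integral>\<^sup>+f. (\<lambda>g. h g / T) (\<pi> n0 f) \<partial>\<mu> n)"
    by (intro nn_integral_cong) (auto simp: indicator_def)
  also have "\<dots> = (\<integral>\<^sup>+g. h g / T \<partial>distr (\<mu> n) (count_space (\<Omega> n0)) (\<pi> n0))"
    by (subst nn_integral_distr) (auto simp: meas_mu)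
  also have "\<dots> = (\<integral>\<^sup>+g. h g / T \<partial>\<mu> n0)"
    using cons'[OF n] by simp
  also have "\<dots> = T / T"
    unfolding T_def by (subst nn_integral_divide) (auto simp: meas_mu')
  also have "\<dots> = 1" using T_pos by (simp add: ennreal_divide_self)
  finally show "emeasure (Q n) (space (Q n)) = 1" .
qed


definition tm where "tm J f = restrict (\<lambda>v. discrete (f v)) J"
definition mJ where "mJ J = (LEAST n. n0 \<le> n \<and> J \<subseteq> V n)"
definition P where "P J = distr (Q (mJ J)) (PiM J (\<lambda>_. borel)) (tm J)"

lemma tm_space: "tm J f \<in> space (PiM J (\<lambda>_. borel))"
  unfolding tm_def by (simp add: space_PiM)

lemma meas_tm: "tm J \<in> measurable (Q n) (PiM J (\<lambda>_. borel))"
  using tm_space by (auto simp: meas_Q)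

lemma mJ: assumes "finite J"
  shows "n0 \<le> mJ J" "J \<subseteq> V (mJ J)" "\<And>n. n0 \<le> n \<Longrightarrow> J \<subseteq> V n \<Longrightarrow> mJ J \<le> n"
proof -
  have ex: "\<exists>n. n0 \<le> n \<and> J \<subseteq> V n" using finite_in_V[OF assms] by blast
  show "n0 \<le> mJ J" "J \<subseteq> V (mJ J)" using LeastI_ex[OF ex] unfolding mJ_def by auto
  show "\<And>n. n0 \<le> n \<Longrightarrow> J \<subseteq> V n \<Longrightarrow> mJ J \<le> n" unfolding mJ_def by (auto intro: Least_le)
qed

lemma P_alt:
  assumes J: "finite J" and n: "n0 \<le> n" "J \<subseteq> V n"
  shows "P J = distr (Q n) (PiM J (\<lambda>_. borel)) (tm J)"
proof -
  let ?m = "mJ J"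
  have m: "n0 \<le> ?m" "?m \<le> n" "J \<subseteq> V ?m" using mJ[OF J] n by auto
  have "P J = distr (distr (Q n) (count_space (\<Omega> ?m)) (\<pi> ?m)) (PiM J (\<lambda>_. borel)) (tm J)"
    unfolding P_def using Q_cons[OF m(1,2)] by simp
  also have "\<dots> = distr (Q n) (PiM J (\<lambda>_. borel)) (tm J \<circ> \<pi> ?m)"
    by (rule distr_distr) (auto simp: meas_Q measurable_count_space_eq1 tm_space)
  also have "\<dots> = distr (Q n) (PiM J (\<lambda>_. borel)) (tm J)"
    using m(3) by (intro distr_cong) (auto simp: tm_def proj_n_def restrict_def fun_eq_iff)
  finally show ?thesis .
qed

lemma P_proj:
  assumes JH: "J \<subseteq> H" "finite H"
  shows "P J = distr (P H) (PiM J (\<lambda>_. borel)) (\<lambda>f. restrict f J)"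
proof -
  have fJ: "finite J" using JH finite_subset by blast
  obtain n where n: "n0 \<le> n" "H \<subseteq> V n" using finite_in_V[OF JH(2)] by blast
  have "distr (P H) (PiM J (\<lambda>_. borel)) (\<lambda>f. restrict f J)
      = distr (distr (Q n) (PiM H (\<lambda>_. borel)) (tm H)) (PiM J (\<lambda>_. borel)) (\<lambda>f. restrict f J)"
    using P_alt[OF JH(2) n] by simp
  also have "\<dots> = distr (Q n) (PiM J (\<lambda>_. borel)) ((\<lambda>f. restrict f J) \<circ> tm H)"
    by (rule distr_distr[OF measurable_restrict_subset[OF JH(1)] meas_tm])
  also have "\<dots> = distr (Q n) (PiM J (\<lambda>_. borel)) (tm J)"
    using JH(1) by (intro distr_cong) (auto simp: tm_def restrict_def fun_eq_iff)
  also have "\<dots> = P J" using P_alt[OF fJ n(1)] n(2) JH(1) by auto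
  finally show "P J = distr (P H) (PiM J (\<lambda>_. borel)) (\<lambda>f. restrict f J)" ..
qed

lemma P_prob: "finite J \<Longrightarrow> prob_space (P J)"
  unfolding P_def using mJ prob_Q by (intro prob_space.prob_space_distr meas_tm) auto

lemma projfam: "projective_family UNIV P (\<lambda>_. borel)"
  unfolding projective_family_def using P_proj P_prob by blast

sublocale PL: polish_projective UNIV P
  unfolding polish_projective_def by (rule projfam)

lemma lim_distr:
  assumes J: "finite J"
  shows "distr PL.lim (PiM J (\<lambda>_. borel)) (\<lambda>g. restrict g J) = P J"
proof (rule measure_eqI)
  show "sets (distr PL.lim (PiM J (\<lambda>_. borel)) (\<lambda>g. restrict g J)) = sets (P J)"
    using PL.sets_P[OF J] by simp
  fix X assume "X \<in> sets (distr PL.lim (PiM J (\<lambda>_. borel)) (\<lambda>g. restrict g J))"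
  then have X: "X \<in> sets (PiM J (\<lambda>_. borel))" by simp
  have m: "(\<lambda>g. restrict g J) \<in> measurable PL.lim (PiM J (\<lambda>_. borel))"
    using measurable_restrict_subset[of J UNIV] by (simp add: measurable_cong_sets[OF PL.sets_lim refl])
  have "emeasure (distr PL.lim (PiM J (\<lambda>_. borel)) (\<lambda>g. restrict g J)) X
      = emeasure PL.lim ((\<lambda>g. restrict g J) -` X \<inter> space PL.lim)"
    by (rule emeasure_distr[OF m X])
  also have "(\<lambda>g. restrict g J) -` X \<inter> space PL.lim = prod_emb UNIV (\<lambda>_. borel) J X"
    by (simp add: prod_emb_def space_PiM)
  also have "emeasure PL.lim \<dots> = emeasure (P J) X"
    using PL.emeasure_lim_emb[OF _ J X] by simp
  finally show "emeasure (distr PL.lim (PiM J (\<lambda>_. borel)) (\<lambda>g. restrict g J)) X = emeasure (P J) X" .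
qed


definition S where "S g = (\<lambda>v. of_discrete (g v))"
definition mubar where "mubar = density (distr PL.lim (Omega_Borel enum) S) (\<lambda>\<sigma>. T / h (\<pi> n0 \<sigma>))"

lemma pi_S_restrict: "\<pi> n (S (restrict g (V n))) = \<pi> n (S g)"
  unfolding proj_n_def S_def by (auto simp: restrict_def fun_eq_iff)

lemma meas_restrict_lim: "(\<lambda>g. restrict g J) \<in> measurable PL.lim (PiM J (\<lambda>_. borel))"
  using measurable_restrict_subset[of J UNIV] by (simp add: measurable_cong_sets[OF PL.sets_lim refl])

lemma S_meas: "S \<in> measurable PL.lim (Omega_Borel enum)"
proof (rule measurable_sigma_sets[OF sets_OB])
  show "G \<subseteq> Pow UNIV" by simp
  show "S \<in> space PL.lim \<rightarrow> UNIV" by simp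
  fix y assume "y \<in> G"
  then obtain n B where y: "y = \<pi> n -` B" unfolding G_def by blast
  define R where "R = {r \<in> PiE (V n) (\<lambda>_. UNIV). \<pi> n (S r) \<in> B}"
  have R: "R \<in> sets (PiM (V n) (\<lambda>_. borel))"
    unfolding sets_PiM_disc[OF finite_V] R_def by auto
  have "S -` y \<inter> space PL.lim = (\<lambda>g. restrict g (V n)) -` R \<inter> space PL.lim"
    unfolding y R_def using pi_S_restrict by auto
  also have "\<dots> \<in> sets PL.lim" by (rule measurable_sets[OF meas_restrict_lim R])
  finally show "S -` y \<inter> space PL.lim \<in> sets PL.lim" .
qed

lemma sets_mubar: "sets mubar = sets (Omega_Borel enum)"
  unfolding mubar_def by simp

lemma dens_meas: "(\<lambda>\<sigma>. T / h (\<pi> n0 \<sigma>)) \<in> borel_measurable (Omega_Borel enum)"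
  by (rule measurable_compose[OF pi_meas, of "\<lambda>\<omega>. T / h \<omega>"]) (simp add: measurable_count_space_eq1)

lemma proj_bar:
  assumes n: "n0 \<le> n"
  shows "proj_measure E x0 n mubar = \<mu> n"
  unfolding proj_measure_def
proof (rule measure_eqI)
  show "sets (distr mubar (count_space (\<Omega> n)) (\<pi> n)) = sets (\<mu> n)" using sets_mu by simp
  fix X assume "X \<in> sets (distr mubar (count_space (\<Omega> n)) (\<pi> n))"
  then have X: "X \<subseteq> \<Omega> n" by simp
  have sp: "space mubar = UNIV" using sets_eq_imp_space_eq[OF sets_mubar] by simp
  have m: "\<pi> n \<in> measurable mubar (count_space (\<Omega> n))"
    using pi_meas by (simp add: measurable_cong_sets[OF sets_mubar refl])
  define F where "F r = T / h (\<pi> n0 (S r)) * indicator X (\<pi> n (S r))" for r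
  have Fm: "F \<in> borel_measurable (PiM (V n) (\<lambda>_. borel))"
    by (simp add: meas_PiM_disc[OF finite_V])
  have "emeasure (distr mubar (count_space (\<Omega> n)) (\<pi> n)) X = emeasure mubar (\<pi> n -` X)"
    using sp X by (subst emeasure_distr[OF m]) auto
  also have "\<dots> = (\<integral>\<^sup>+\<sigma>. T / h (\<pi> n0 \<sigma>) * indicator (\<pi> n -` X) \<sigma> \<partial>distr PL.lim (Omega_Borel enum) S)"
    unfolding mubar_def by (subst emeasure_density) (auto simp: dens_meas G_sets)
  also have "\<dots> = (\<integral>\<^sup>+g. T / h (\<pi> n0 (S g)) * indicator (\<pi> n -` X) (S g) \<partial>PL.lim)"
    by (subst nn_integral_distr[OF S_meas]) (auto intro!: borel_measurable_times_ennreal dens_meas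
        borel_measurable_indicator G_sets)
  also have "\<dots> = (\<integral>\<^sup>+g. F (restrict g (V n)) \<partial>PL.lim)"
  proof (intro nn_integral_cong)
    fix g
    have "\<pi> n0 (S g) = \<pi> n0 (\<pi> n (S g))" using pi_pi[OF n] by simp
    also have "\<dots> = \<pi> n0 (S (restrict g (V n)))" using pi_pi[OF n] pi_S_restrict by metis
    finally show "T / h (\<pi> n0 (S g)) * indicator (\<pi> n -` X) (S g) = F (restrict g (V n))"
      unfolding F_def using pi_S_restrict[of n g] by (simp add: indicator_def)
  qed
  also have "\<dots> = (\<integral>\<^sup>+r. F r \<partial>distr PL.lim (PiM (V n) (\<lambda>_. borel)) (\<lambda>g. restrict g (V n)))"
    by (subst nn_integral_distr[OF meas_restrict_lim]) (auto simp: Fm)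
  also have "\<dots> = (\<integral>\<^sup>+r. F r \<partial>distr (Q n) (PiM (V n) (\<lambda>_. borel)) (tm (V n)))"
    using lim_distr[OF finite_V] P_alt[OF finite_V n] by simp
  also have "\<dots> = (\<integral>\<^sup>+f. F (tm (V n) f) \<partial>Q n)"
    by (subst nn_integral_distr[OF meas_tm]) (auto simp: Fm)
  also have "\<dots> = (\<integral>\<^sup>+f. h (\<pi> n0 f) / T * F (tm (V n) f) \<partial>\<mu> n)"
    unfolding Q_def by (subst nn_integral_density) (auto simp: meas_mu')
  also have "\<dots> = (\<integral>\<^sup>+f. indicator X f \<partial>\<mu> n)"
  proof (intro nn_integral_cong)
    fix f assume "f \<in> space (\<mu> n)"
    then have f: "f \<in> \<Omega> n" by simp
    have e: "\<pi> n (S (tm (V n) f)) = f"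
      using pi_id[OF f] unfolding S_def tm_def proj_n_def by (auto simp: restrict_def fun_eq_iff discrete_inverse) metis
    have e0: "\<pi> n0 (S (tm (V n) f)) = \<pi> n0 f" using pi_pi[OF n] e by metis
    have hp: "0 < h (\<pi> n0 f)" "h (\<pi> n0 f) < \<infinity>" using h_pos[OF pi_in] by auto
    show "h (\<pi> n0 f) / T * F (tm (V n) f) = indicator X f"
      unfolding F_def e e0 using ennr_cancel[OF hp T_pos] by simp
  qed
  also have "\<dots> = emeasure (\<mu> n) X" using X by (simp add: sets_mu)
  finally show "emeasure (distr mubar (count_space (\<Omega> n)) (\<pi> n)) X = emeasure (\<mu> n) X" .
qed

lemma exists_bar: "sets mubar = sets (Omega_Borel enum) \<and> (\<forall>n. proj_measure E x0 n mubar = \<mu> n)"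
  using sets_mubar proj_all[OF sets_mubar proj_bar] by blast

end

theorem mainTheorem8:
  fixes k :: nat
    and E :: "'v \<Rightarrow> 'v \<Rightarrow> bool"
    and enum :: "nat \<Rightarrow> 'v"
    and x0 :: 'v
    and \<mu> :: "nat \<Rightarrow> ('v \<Rightarrow> 'a::countable) measure"
    and n0 :: nat
  assumes "k \<ge> 1"
    and "cayley_tree k E"
    and "bij enum"
    and "\<And>n. sets (\<mu> n) = Pow (Omega_n E x0 n)"
    and "\<And>i j. i < j \<Longrightarrow> proj_measure E x0 i (\<mu> j) = \<mu> i"
    and "sigma_finite_measure (\<mu> n0)"
  shows "\<exists>!\<mu>bar. sets \<mu>bar = sets (Omega_Borel enum)
            \<and> (\<forall>n. proj_measure E x0 n \<mu>bar = \<mu> n)"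
proof -
  have lf: "\<And>x. finite {y. E x y}" and cn: "\<And>x y. E\<^sup>*\<^sup>* x y"
    using assms(2) unfolding cayley_tree_def by auto
  obtain h where h: "h \<in> borel_measurable (\<mu> n0)" "integral\<^sup>N (\<mu> n0) h \<noteq> \<infinity>"
    "\<forall>x\<in>space (\<mu> n0). 0 < h x \<and> h x < \<infinity>"
    using sigma_finite_measure.Ex_finite_integrable_function[OF assms(6)] by blast
  have sp: "space (\<mu> n0) = Omega_n E x0 n0"
    using sets_eq_imp_space_eq[of "\<mu> n0" "count_space (Omega_n E x0 n0)"] assms(4) by simp
  interpret K: kol E x0 enum \<mu> n0 h
    using lf cn assms(3,4,5) h sp by unfold_locales auto
  have ex: "\<exists>\<mu>bar. sets \<mu>bar = sets (Omega_Borel enum) \<and> (\<forall>n. proj_measure E x0 n \<mu>bar = \<mu> n)"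
  proof (cases "integral\<^sup>N (\<mu> n0) h = 0")
    case True
    then show ?thesis using K.zero_case
      by (intro exI[of _ "null_measure (Omega_Borel enum)"]) auto
  next
    case False
    interpret KP: kol_pos E x0 enum \<mu> n0 h
      using False by unfold_locales
    show ?thesis using KP.exists_bar by blast
  qed
  then show ?thesis using K.unique by blast
qed

end
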